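(* For every positive integer $q$ there exists an integer $N_1(q)$ such that for every $n \ge N_1(q)$, every $n$-optimal $q$-configuration is non-attacking.
   Context: For $n \in \mathbb{N}$ let $I_n = \{\lfloor (2-n)/2 \rfloor, \lfloor (2-n)/2\rfloor + 1, \ldots, \lfloor n/2 \rfloor\}$ (a set of $n$ consecutive integers) and let the board be $\mathcal{B}_n = I_n \times I_n$. A configuration (of Queens) is a finite set $\mathcal{C} \subset \mathbb{Z}\times\mathbb{Z}$; it is a $q$-configuration if $|\mathcal{C}| = q$. For a square $Q=(x,y)$, its attacked set is $A(Q) = \{(x+i,y),(x,y+i),(x+i,y+i),(x+i,y-i) : i \in \mathbb{Z}\setminus\{0\}\}$, and $A(\mathcal{C}) = \bigcup_{Q\in\mathcal{C}} A(Q)$. The cover of $\mathcal{C}$ on $\mathcal{B}_n$ is $\mathrm{cover}_n(\mathcal{C}) = |(\mathcal{C}\cup A(\mathcal{C}))\cap \mathcal{B}_n|$. A $q$-configuration $\mathcal{C}\subset\mathcal{B}_n$ is $n$-optimal if $\mathrm{cover}_n(\mathcal{C}') \le \mathrm{cover}_n(\mathcal{C})$ for every $q$-configuration $\mathcal{C}'\subset \mathcal{B}_n$. A configuration $\mathcal{C}$ is non-attacking if $Q' \notin A(Q)$ for all distinct $Q, Q' \in \mathcal{C}$. *)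

theory Defs
  imports Main
begin

type_synonym square = "int \<times> int"

definition I_set :: "nat \<Rightarrow> int set" where
  "I_set n = {(2 - int n) div 2 .. int n div 2}"

definition board :: "nat \<Rightarrow> square set" where
  "board n = I_set n \<times> I_set n"

definition attacked :: "square \<Rightarrow> square set" where
  "attacked Q = (case Q of (x, y) \<Rightarrow>
     {(x + i, y) | i. i \<noteq> 0} \<union> {(x, y + i) | i. i \<noteq> 0} \<union>
     {(x + i, y + i) | i. i \<noteq> 0} \<union> {(x + i, y - i) | i. i \<noteq> 0})"

definition attacked_set :: "square set \<Rightarrow> square set" where
  "attacked_set C = (\<Union>Q\<in>C. attacked Q)"

definition cover :: "nat \<Rightarrow> square set \<Rightarrow> nat" where
  "cover n C = card ((C \<union> attacked_set C) \<inter> board n)"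

definition optimal :: "nat \<Rightarrow> nat \<Rightarrow> square set \<Rightarrow> bool" where
  "optimal n q C \<longleftrightarrow> finite C \<and> card C = q \<and> C \<subseteq> board n \<and>
     (\<forall>C'. finite C' \<and> card C' = q \<and> C' \<subseteq> board n \<longrightarrow> cover n C' \<le> cover n C)"

definition non_attacking :: "square set \<Rightarrow> bool" where
  "non_attacking C \<longleftrightarrow> (\<forall>Q\<in>C. \<forall>Q'\<in>C. Q \<noteq> Q' \<longrightarrow> Q' \<notin> attacked Q)"

end

theory Submission
  imports Defs
begin

definition line :: "nat \<Rightarrow> int \<Rightarrow> int \<Rightarrow> square set" where
  "line k a b = {(x,y). if k = 0 then y = b else if k = 1 then x = a
      else if k = 2 then x - y = a - b else x + y = a + b}"

definition gpt :: "nat \<Rightarrow> int \<Rightarrow> int \<Rightarrow> int \<Rightarrow> square" where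
  "gpt k a b x = (if k = 0 then (x,b) else if k = 1 then (a,x)
      else if k = 2 then (x, x - a + b) else (x, a + b - x))"

definition L :: "square \<times> nat \<Rightarrow> square set" where
  "L p = (case p of ((a,b),k) \<Rightarrow> line k a b)"

lemma k4: "(k::nat) < 4 \<longleftrightarrow> k = 0 \<or> k = 1 \<or> k = 2 \<or> k = 3" by arith

lemma ex4: "(\<exists>k\<in>{..<4::nat}. P k) \<longleftrightarrow> P 0 \<or> P 1 \<or> P 2 \<or> P 3"
  by (auto simp: k4)

lemma att_iff: "((a'::int),(b'::int)) \<in> attacked (a,b) \<longleftrightarrow>
   (a',b') \<noteq> (a,b) \<and> (b' = b \<or> a' = a \<or> a' - b' = a - b \<or> a' + b' = a + b)"
proof
  assume "(a',b') \<in> attacked (a,b)"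
  then show "(a',b') \<noteq> (a,b) \<and> (b' = b \<or> a' = a \<or> a' - b' = a - b \<or> a' + b' = a + b)"
    unfolding attacked_def by auto
next
  assume h: "(a',b') \<noteq> (a,b) \<and> (b' = b \<or> a' = a \<or> a' - b' = a - b \<or> a' + b' = a + b)"
  then consider "b' = b" "a' \<noteq> a" | "a' = a" "b' \<noteq> b" | "a' - b' = a - b" "a' \<noteq> a"
    | "a' + b' = a + b" "a' \<noteq> a" by force
  then show "(a',b') \<in> attacked (a,b)"
  proof cases
    case 1 then show ?thesis
      by (simp only: attacked_def prod.case) (rule UnI1, rule UnI1, rule UnI1, rule CollectI, rule exI[of _ "a' - a"], simp)
  next
    case 2 then show ?thesis
      by (simp only: attacked_def prod.case) (rule UnI1, rule UnI1, rule UnI2, rule CollectI, rule exI[of _ "b' - b"], simp)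
  next
    case 3 then show ?thesis
      by (simp only: attacked_def prod.case) (rule UnI1, rule UnI2, rule CollectI, rule exI[of _ "a' - a"], simp)
  next
    case 4 then show ?thesis
      by (simp only: attacked_def prod.case) (rule UnI2, rule CollectI, rule exI[of _ "a' - a"], simp)
  qed
qed

lemma ins_att: "insert (a,b) (attacked (a,b)) = (\<Union>k<4. line k a b)"
proof (rule set_eqI)
  fix p :: square
  obtain x y where p: "p = (x,y)" by fastforce
  show "p \<in> insert (a,b) (attacked (a,b)) \<longleftrightarrow> p \<in> (\<Union>k<4. line k a b)"
    unfolding p by (simp add: att_iff ex4 line_def) auto
qed

lemma cover_set_eq: "C \<union> attacked_set C = (\<Union>p\<in>C\<times>{..<4}. L p)"
proof -
  have "C \<union> attacked_set C = (\<Union>Q\<in>C. insert Q (attacked Q))"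
    by (auto simp: attacked_set_def)
  also have "\<dots> = (\<Union>Q\<in>C. \<Union>k<4. line k (fst Q) (snd Q))"
    using ins_att by (metis prod.collapse)
  also have "\<dots> = (\<Union>p\<in>C\<times>{..<4}. L p)"
    by (auto simp: L_def split: prod.splits) force
  finally show ?thesis .
qed

lemma card_I: "card (I_set n) = n"
proof -
  have "int n div 2 - (2 - int n) div 2 + 1 = int n" by presburger
  then show ?thesis unfolding I_set_def by simp
qed

lemma fin_board: "finite (board n)"
  unfolding board_def I_set_def by simp

lemma line_ub: "card (line k a b \<inter> board n) \<le> n"
proof -
  have "line k a b \<inter> board n \<subseteq> gpt k a b ` I_set n"
  proof
    fix p assume p: "p \<in> line k a b \<inter> board n"
    obtain x y where xy: "p = (x,y)" by fastforce
    show "p \<in> gpt k a b ` I_set n"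
    proof (cases "k = 1")
      case True
      then have "p = gpt k a b y" "y \<in> I_set n" using p xy
        by (auto simp: gpt_def line_def board_def)
      then show ?thesis by blast
    next
      case False
      then have "p = gpt k a b x" "x \<in> I_set n" using p xy
        by (auto simp: gpt_def line_def board_def split: if_splits)
      then show ?thesis by blast
    qed
  qed
  then have "card (line k a b \<inter> board n) \<le> card (gpt k a b ` I_set n)"
    by (rule card_mono[rotated]) (simp add: I_set_def)
  also have "\<dots> \<le> card (I_set n)" by (rule card_image_le) (simp add: I_set_def)
  finally show ?thesis by (simp add: card_I)
qed

lemma line_lb:
  assumes "\<bar>a\<bar> + \<bar>b\<bar> \<le> d"
  shows "2 * ((int n - 1) div 2) + 1 - 2 * d \<le> int (card (line k a b \<inter> board n))"
proof -
  define h where "h = (int n - 1) div 2"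
  define J where "J = {-h+d..h-d}"
  have sub: "{-h..h} \<subseteq> I_set n" unfolding I_set_def h_def by auto
  have "gpt k a b ` J \<subseteq> line k a b \<inter> board n"
  proof
    fix p assume "p \<in> gpt k a b ` J"
    then obtain x where x: "x \<in> J" "p = gpt k a b x" by blast
    have "\<bar>x\<bar> \<le> h - d" using x(1) unfolding J_def by auto
    then have "\<bar>b\<bar> \<le> h" "\<bar>a\<bar> \<le> h" "\<bar>x\<bar> \<le> h" "\<bar>x - a + b\<bar> \<le> h" "\<bar>a + b - x\<bar> \<le> h"
      using assms by arith+
    then have "fst p \<in> {-h..h}" "snd p \<in> {-h..h}" using x(2)
      by (auto simp: gpt_def)
    then have "p \<in> board n" using sub unfolding board_def by (auto simp: mem_Times_iff)
    moreover have "p \<in> line k a b" using x(2) by (auto simp: gpt_def line_def)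
    ultimately show "p \<in> line k a b \<inter> board n" by blast
  qed
  moreover have "inj_on (gpt k a b) J"
    by (rule inj_onI) (auto simp: gpt_def split: if_splits)
  ultimately have "card J \<le> card (line k a b \<inter> board n)"
    using fin_board by (meson card_inj_on_le finite_Int)
  moreover have "card J = nat (2*h + 1 - 2*d)" unfolding J_def by simp
  ultimately show ?thesis unfolding h_def by linarith
qed

lemma union_lb:
  assumes "finite I" "\<forall>i\<in>I. finite (f i)"
    "\<forall>i\<in>I. \<forall>j\<in>I. i \<noteq> j \<longrightarrow> card (f i \<inter> f j) \<le> 1"
  shows "(\<Sum>i\<in>I. card (f i)) \<le> card (\<Union>i\<in>I. f i) + card I * card I"
  using assms
proof (induction I rule: finite_induct)
  case empty then show ?case by simp
next
  case (insert i I)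
  let ?U = "\<Union>j\<in>I. f j"
  have IH: "(\<Sum>j\<in>I. card (f j)) \<le> card ?U + card I * card I"
    using insert by auto
  have finU: "finite ?U" using insert by auto
  have fi: "finite (f i)" using insert by auto
  have "f i \<inter> ?U = (\<Union>j\<in>I. f i \<inter> f j)" by blast
  then have "card (f i \<inter> ?U) \<le> (\<Sum>j\<in>I. card (f i \<inter> f j))"
    using card_UN_le[OF insert(1), of "\<lambda>j. f i \<inter> f j"] by simp
  also have "\<dots> \<le> (\<Sum>j\<in>I. 1)"
    apply (rule sum_mono) using insert by (metis insertCI)
  finally have c: "card (f i \<inter> ?U) \<le> card I" by simp
  have u: "card (f i) + card ?U = card (f i \<union> ?U) + card (f i \<inter> ?U)"
    using card_Un_Int[OF fi finU] .
  have "(\<Sum>j\<in>insert i I. card (f j)) = card (f i) + (\<Sum>j\<in>I. card (f j))"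
    using insert by simp
  also have "\<dots> \<le> card (f i \<union> ?U) + card I + card I * card I" using IH u c by linarith
  also have "\<dots> \<le> card (\<Union>j\<in>insert i I. f j) + card (insert i I) * card (insert i I)"
    using insert by simp
  finally show ?case .
qed

lemma cross_unique:
  assumes "k \<noteq> k'" "k < 4" "k' < 4" "p \<in> line k a b" "p \<in> line k' a' b'"
    "p' \<in> line k a b" "p' \<in> line k' a' b'"
  shows "p = p'"
proof -
  obtain x y x' y' where "p = (x,y)" "p' = (x',y')" by fastforce
  then show ?thesis using assms unfolding line_def k4 by auto
qed

lemma same_dir:
  assumes "k < 4" "p \<in> line k a b" "p \<in> line k a' b'"
  shows "b' = b \<or> a' = a \<or> a' - b' = a - b \<or> a' + b' = a + b"
proof -
  obtain x y where "p = (x,y)" by fastforce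
  then show ?thesis using assms unfolding line_def k4 by (auto split: if_splits)
qed

lemma cover_lb:
  assumes "finite C" "non_attacking C"
  shows "(\<Sum>p\<in>C\<times>{..<4}. card (L p \<inter> board n)) \<le> cover n C + card (C\<times>{..<4::nat}) * card (C\<times>{..<4::nat})"
proof -
  have "(\<Sum>p\<in>C\<times>{..<4}. card (L p \<inter> board n)) \<le> card (\<Union>p\<in>C\<times>{..<4}. L p \<inter> board n) + card (C\<times>{..<4::nat}) * card (C\<times>{..<4::nat})"
  proof (rule union_lb)
    show "finite (C\<times>{..<4::nat})" using assms by simp
    show "\<forall>i\<in>C\<times>{..<4}. finite (L i \<inter> board n)" using fin_board by simp
    show "\<forall>i\<in>C\<times>{..<4}. \<forall>j\<in>C\<times>{..<4}. i \<noteq> j \<longrightarrow> card ((L i \<inter> board n) \<inter> (L j \<inter> board n)) \<le> 1"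
    proof (intro ballI impI)
      fix i j assume i: "i \<in> C\<times>{..<4::nat}" and j: "j \<in> C\<times>{..<4::nat}" and ij: "i \<noteq> j"
      obtain a b k a' b' k' where ii: "i = ((a,b),k)" and jj: "j = ((a',b'),k')" by (metis prod.collapse)
      have fin: "finite ((L i \<inter> board n) \<inter> (L j \<inter> board n))" using fin_board by simp
      show "card ((L i \<inter> board n) \<inter> (L j \<inter> board n)) \<le> 1"
      proof (cases "k = k'")
        case False
        have kk: "k < 4" "k' < 4" using i j ii jj by auto
        have "\<forall>p\<in>(L i \<inter> board n) \<inter> (L j \<inter> board n). \<forall>p'\<in>(L i \<inter> board n) \<inter> (L j \<inter> board n). p = p'"
          using cross_unique[OF False kk] unfolding ii jj L_def by auto
        then show ?thesis using card_le_Suc0_iff_eq[OF fin] by simp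
      next
        case True
        then have ne: "(a,b) \<noteq> (a',b')" using ij ii jj by auto
        have "(a',b') \<notin> attacked (a,b)" using assms(2) i j ne unfolding non_attacking_def ii jj by auto
        then have nn: "\<not> (b' = b \<or> a' = a \<or> a' - b' = a - b \<or> a' + b' = a + b)"
          using ne att_iff by auto
        have "(L i \<inter> board n) \<inter> (L j \<inter> board n) = {}"
          using same_dir[of k _ a b a' b'] nn i True unfolding ii jj L_def by auto
        then show ?thesis by simp
      qed
    qed
  qed
  moreover have "(\<Union>p\<in>C\<times>{..<4}. L p \<inter> board n) = (C \<union> attacked_set C) \<inter> board n"
    unfolding cover_set_eq by blast
  ultimately show ?thesis unfolding cover_def by simp
qed

lemma line_eq_att:
  assumes "(a',b') \<in> attacked (a,b)"
  shows "\<exists>k<4. line k a b = line k a' b'"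
proof -
  have "b' = b \<or> a' = a \<or> a' - b' = a - b \<or> a' + b' = a + b" using assms att_iff by auto
  then show ?thesis
  proof (elim disjE)
    assume "b' = b" then show ?thesis by (intro exI[of _ 0]) (simp add: line_def)
  next
    assume "a' = a" then show ?thesis by (intro exI[of _ 1]) (simp add: line_def)
  next
    assume "a' - b' = a - b" then show ?thesis by (intro exI[of _ 2]) (simp add: line_def)
  next
    assume "a' + b' = a + b" then show ?thesis by (intro exI[of _ 3]) (simp add: line_def)
  qed
qed

lemma cover_ub:
  assumes "finite C" "Q \<in> C" "Q' \<in> C" "Q \<noteq> Q'" "Q' \<in> attacked Q"
  shows "cover n C \<le> (4 * card C - 1) * n"
proof -
  let ?A = "C \<times> {..<4::nat}"
  have finA: "finite ?A" using assms by simp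
  obtain a b a' b' where q: "Q = (a,b)" "Q' = (a',b')" by fastforce
  obtain k where k: "k < 4" "line k a b = line k a' b'" using line_eq_att assms(5) q by blast
  have "\<not> inj_on L ?A"
  proof
    assume "inj_on L ?A"
    moreover have "((a,b),k) \<in> ?A" "((a',b'),k) \<in> ?A" using assms q k by auto
    moreover have "L ((a,b),k) = L ((a',b'),k)" using k by (simp add: L_def)
    ultimately have "((a,b),k) = ((a',b'),k)" by (meson inj_onD)
    then show False using assms q by simp
  qed
  then have "card (L ` ?A) \<noteq> card ?A" using inj_on_iff_eq_card[OF finA] by blast
  then have cl: "card (L ` ?A) < 4 * card C" using card_image_le[OF finA, of L] by (simp add: card_cartesian_product)
  have "cover n C = card (\<Union>l\<in>L ` ?A. l \<inter> board n)"
  proof -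
    have "(\<Union>p\<in>?A. L p) \<inter> board n = (\<Union>l\<in>L ` ?A. l \<inter> board n)" by blast
    then show ?thesis unfolding cover_def cover_set_eq by simp
  qed
  also have "\<dots> \<le> (\<Sum>l\<in>L ` ?A. card (l \<inter> board n))" by (rule card_UN_le) (use finA in simp)
  also have "\<dots> \<le> (\<Sum>l\<in>L ` ?A. n)"
  proof (rule sum_mono)
    fix l assume "l \<in> L ` ?A"
    then obtain a b k where "l = line k a b" unfolding L_def by auto
    then show "card (l \<inter> board n) \<le> n" using line_ub by simp
  qed
  also have "\<dots> = card (L ` ?A) * n" by simp
  also have "\<dots> \<le> (4 * card C - 1) * n" using cl by (intro mult_right_mono) auto
  finally show ?thesis .
qed

theorem mainTheorem1:
  fixes q :: nat
  assumes "q \<ge> 1"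
  shows "\<exists>N1 :: int. \<forall>n :: nat. n \<ge> 1 \<longrightarrow> int n \<ge> N1 \<longrightarrow>
           (\<forall>C. optimal n q C \<longrightarrow> non_attacking C)"
proof -
  define N where "N = 40 * int q * int q + 4 * int q + 1"
  show ?thesis
  proof (intro exI[of _ N] allI impI)
    fix n :: nat and C
    assume n1: "n \<ge> 1" and nN: "int n \<ge> N" and opt: "optimal n q C"
    show "non_attacking C"
    proof (rule ccontr)
      assume "\<not> non_attacking C"
      then obtain Q Q' where QQ: "Q \<in> C" "Q' \<in> C" "Q \<noteq> Q'" "Q' \<in> attacked Q"
        unfolding non_attacking_def by blast
      have finC: "finite C" "card C = q" "C \<subseteq> board n" using opt unfolding optimal_def by auto
      have ub: "cover n C \<le> (4 * q - 1) * n" using cover_ub[OF finC(1) QQ] finC by simp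
      define C0 where "C0 = (\<lambda>i::nat. (int i, 2 * int i)) ` {..<q}"
      have inj: "inj_on (\<lambda>i::nat. (int i, 2 * int i)) {..<q}" by (rule inj_onI) simp
      have fin0: "finite C0" and card0: "card C0 = q" using inj by (auto simp: C0_def card_image)
      have "0 \<le> 40 * int q * int q" by simp
      then have qn: "4 * int q + 1 \<le> int n" using nN N_def by linarith
      have sub0: "C0 \<subseteq> board n"
      proof
        fix p assume "p \<in> C0"
        then obtain i where i: "i < q" "p = (int i, 2 * int i)" unfolding C0_def by auto
        have "int i < int q" using i by simp
        then have "(2 - int n) div 2 \<le> int i" "int i \<le> int n div 2" "(2 - int n) div 2 \<le> 2 * int i"
          "2 * int i \<le> int n div 2" using qn n1 by presburger+
        then show "p \<in> board n" using i unfolding board_def I_set_def by auto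
      qed
      have na0: "non_attacking C0" unfolding non_attacking_def C0_def using att_iff by auto
      have c0c: "cover n C0 \<le> cover n C" using opt fin0 card0 sub0 unfolding optimal_def by blast
      let ?A = "C0 \<times> {..<4::nat}"
      have cA: "card ?A = 4 * q" using card0 by (simp add: card_cartesian_product)
      have lb: "(\<Sum>p\<in>?A. card (L p \<inter> board n)) \<le> cover n C0 + card ?A * card ?A"
        by (rule cover_lb[OF fin0 na0])
      define h where "h = (int n - 1) div 2"
      have each: "2*h + 1 - 2*(3 * int q) \<le> int (card (L p \<inter> board n))" if p: "p \<in> ?A" for p
      proof -
        obtain i k where ik: "i < q" "p = ((int i, 2 * int i), k)" using p unfolding C0_def by auto
        have "\<bar>int i\<bar> + \<bar>2 * int i\<bar> \<le> 3 * int q" using ik by simp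
        from line_lb[OF this, of n k] show ?thesis using ik unfolding h_def L_def by simp
      qed
      have "(\<Sum>p\<in>?A. (2*h + 1 - 2*(3 * int q))) \<le> (\<Sum>p\<in>?A. int (card (L p \<inter> board n)))"
        by (rule sum_mono) (rule each)
      then have S1: "int (card ?A) * (2*h + 1 - 6 * int q) \<le> int (\<Sum>p\<in>?A. card (L p \<inter> board n))"
        by simp
      have hn: "int n - 1 \<le> 2*h + 1" unfolding h_def by presburger
      have "4 * int q * (int n - 1 - 6 * int q) \<le> 4 * int q * (2*h + 1 - 6 * int q)"
        by (rule mult_left_mono) (use hn in auto)
      then have A: "4 * int q * (int n - 1 - 6 * int q) \<le> int (\<Sum>p\<in>?A. card (L p \<inter> board n))"
        using S1 cA by simp
      have B: "int (\<Sum>p\<in>?A. card (L p \<inter> board n)) \<le> int (cover n C0) + 16 * int q * int q"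
      proof -
        have "card ?A * card ?A = 16 * q * q" using cA by simp
        then have "(\<Sum>p\<in>?A. card (L p \<inter> board n)) \<le> cover n C0 + 16 * q * q" using lb by simp
        then have "int (\<Sum>p\<in>?A. card (L p \<inter> board n)) \<le> int (cover n C0 + 16 * q * q)" by (simp only: of_nat_le_iff)
        then show ?thesis by simp
      qed
      have D: "int (cover n C) \<le> (4 * int q - 1) * int n"
      proof -
        have "int (cover n C) \<le> int ((4 * q - 1) * n)" using ub by (simp only: of_nat_le_iff)
        also have "\<dots> = (4 * int q - 1) * int n" using assms by (simp add: of_nat_diff)
        finally show ?thesis .
      qed
      have "4 * int q * (int n - 1 - 6 * int q) \<le> (4 * int q - 1) * int n + 16 * int q * int q"
        using A B D c0c by linarith
      then have "int n \<le> 40 * int q * int q + 4 * int q" by (simp add: algebra_simps)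
      then show False using nN N_def by linarith
    qed
  qed
qed

end
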